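(* Let $N\ge1$ and let $a_0,\dots,a_N$, $b_0,\dots,b_N$, $c_0,\dots,c_N$ be real numbers such that the $a_i$ are pairwise distinct, the $b_j$ are pairwise distinct, and the $c_k$ are pairwise distinct. Then the $\binom{N+3}{3}$ operators $$(a_i\mathbb{I}+b_j\sigma_X+c_k\sigma_Y+\sigma_Z)^{\otimes N},\qquad i,j,k\in\mathbb{Z}_{\ge0},\ i+j+k\le N,$$ are linearly independent over $\mathbb{R}$ and form a basis of the real vector space $\mathrm{Sym}_N(G_1)$ of permutation-invariant Hermitian operators on $N$ qubits.
   Context: $\mathbb{I},\sigma_X,\sigma_Y,\sigma_Z$ denote the $2\times2$ identity and Pauli matrices. For $\pi\in S_N$, $P(\pi)$ is the unitary on $(\mathbb{C}^2)^{\otimes N}$ permuting the tensor factors according to $\pi$. $\mathrm{Sym}_N(G_1)$ is the real vector space of Hermitian operators $M$ on $(\mathbb{C}^2)^{\otimes N}$ with $P(\pi)MP(\pi)^\dagger=M$ for all $\pi\in S_N$; it has real dimension $\binom{N+3}{3}$. *)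

theory Defs
  imports "HOL-Analysis.Analysis" "HOL-Combinatorics.Permutations"
begin

text \<open>Operators on (C^2)^(tensor N): matrices indexed by computational basis states,
  i.e. bit lists of length N (False = |0>, True = |1>).\<close>

type_synonym qop = "bool list \<Rightarrow> bool list \<Rightarrow> complex"
type_synonym qmat2 = "bool \<Rightarrow> bool \<Rightarrow> complex"

definition idM :: qmat2 where "idM x y = (if x = y then 1 else 0)"
definition sigX :: qmat2 where "sigX x y = (if x \<noteq> y then 1 else 0)"
definition sigY :: qmat2 where
  "sigY x y = (if x = False \<and> y = True then - \<i> else if x = True \<and> y = False then \<i> else 0)"
definition sigZ :: qmat2 where
  "sigZ x y = (if x = y then (if x then -1 else 1) else 0)"

definition pauli_comb :: "real \<Rightarrow> real \<Rightarrow> real \<Rightarrow> qmat2" where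
  "pauli_comb a b c x y = of_real a * idM x y + of_real b * sigX x y + of_real c * sigY x y + sigZ x y"

definition states :: "nat \<Rightarrow> bool list set" where
  "states N = {xs. length xs = N}"

definition qubit_ops :: "nat \<Rightarrow> qop set" where
  "qubit_ops N = {M. \<forall>xs ys. (xs \<notin> states N \<or> ys \<notin> states N) \<longrightarrow> M xs ys = 0}"

definition tensor_pow :: "nat \<Rightarrow> qmat2 \<Rightarrow> qop" where
  "tensor_pow N A xs ys =
     (if xs \<in> states N \<and> ys \<in> states N then (\<Prod>t<N. A (xs ! t) (ys ! t)) else 0)"

definition op_mult :: "nat \<Rightarrow> qop \<Rightarrow> qop \<Rightarrow> qop" where
  "op_mult N M1 M2 xs ys = (\<Sum>zs\<in>states N. M1 xs zs * M2 zs ys)"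

definition adjoint_op :: "qop \<Rightarrow> qop" where
  "adjoint_op M xs ys = cnj (M ys xs)"

text \<open>P(pi): permutes the tensor factors, |x_0..x_{N-1}> maps to the state whose factor
  pi(t) is x_t.\<close>
definition permute_state :: "nat \<Rightarrow> (nat \<Rightarrow> nat) \<Rightarrow> bool list \<Rightarrow> bool list" where
  "permute_state N \<pi> xs = map (\<lambda>t. xs ! (inv \<pi> t)) [0..<N]"

definition perm_op :: "nat \<Rightarrow> (nat \<Rightarrow> nat) \<Rightarrow> qop" where
  "perm_op N \<pi> xs ys = (if xs \<in> states N \<and> ys \<in> states N \<and> xs = permute_state N \<pi> ys then 1 else 0)"

definition hermitian_op :: "qop \<Rightarrow> bool" where
  "hermitian_op M \<longleftrightarrow> adjoint_op M = M"

definition Sym_ops :: "nat \<Rightarrow> qop set" where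
  "Sym_ops N = {M \<in> qubit_ops N. hermitian_op M \<and>
      (\<forall>\<pi>. \<pi> permutes {..<N} \<longrightarrow>
         op_mult N (op_mult N (perm_op N \<pi>) M) (adjoint_op (perm_op N \<pi>)) = M)}"

definition real_comb :: "'i set \<Rightarrow> ('i \<Rightarrow> real) \<Rightarrow> ('i \<Rightarrow> qop) \<Rightarrow> qop" where
  "real_comb I r F xs ys = (\<Sum>t\<in>I. complex_of_real (r t) * F t xs ys)"

end

theory Submission
  imports Defs "HOL-Library.Function_Algebras"
begin
definition rscale :: "real \<Rightarrow> qop \<Rightarrow> qop" where
  "rscale r M = (\<lambda>xs ys. complex_of_real r * M xs ys)"
interpretation RV: vector_space rscale
  by unfold_locales (auto simp: rscale_def fun_eq_iff algebra_simps)
lemma qsum_apply: "(sum f I) xs ys = (\<Sum>i\<in>I. f i xs ys)"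
  for f :: "'i \<Rightarrow> qop"
  by (induction I rule: infinite_finite_induct) auto
lemma card_T2: "card {(i::nat,j::nat). i+j \<le> m} = (m+2) choose 2"
proof (induction m)
  case 0
  have "{(i::nat,j::nat). i+j \<le> 0} = {(0,0)}" by auto
  then show ?case by (simp add: numeral_2_eq_2)
next
  case (Suc m)
  have e: "{(i::nat,j::nat). i+j \<le> Suc m} = {(i,j). i+j \<le> m} \<union> (\<lambda>i. (i, Suc m - i)) ` {..Suc m}"
    by (auto simp: image_iff)
  have fin: "finite {(i::nat,j::nat). i+j \<le> m}"
    by (rule finite_subset[of _ "{..m}\<times>{..m}"]) auto
  have c: "card ((\<lambda>i. (i, Suc m - i)) ` {..Suc m}) = Suc (Suc m)"
    by (subst card_image) (auto simp: inj_on_def)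
  have "card {(i::nat,j::nat). i+j \<le> Suc m} = card {(i::nat,j::nat). i+j \<le> m} + Suc (Suc m)"
    unfolding e by (subst card_Un_disjoint) (use fin c in auto)
  then show ?case using Suc by (simp add: numeral_2_eq_2)
qed

lemma card_level: "card {(i::nat,j::nat,k::nat). i+j+k = m} = (m+2) choose 2"
proof -
  have "{(i::nat,j::nat,k::nat). i+j+k = m} = (\<lambda>(i,j). (i,j,m-i-j)) ` {(i,j). i+j \<le> m}"
    by (auto simp: image_iff)
  moreover have "inj_on (\<lambda>(i::nat,j::nat). (i,j,m-i-j)) {(i,j). i+j \<le> m}"
    by (auto simp: inj_on_def)
  ultimately show ?thesis by (simp add: card_image card_T2)
qed

lemma card_T3: "card {(i::nat,j::nat,k::nat). i+j+k \<le> N} = (N+3) choose 3"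
proof (induction N)
  case 0
  have "{(i::nat,j::nat,k::nat). i+j+k \<le> 0} = {(0,0,0)}" by auto
  then show ?case by (simp add: numeral_3_eq_3)
next
  case (Suc m)
  have e: "{(i::nat,j::nat,k::nat). i+j+k \<le> Suc m} = {(i,j,k). i+j+k \<le> m} \<union> {(i,j,k). i+j+k = Suc m}"
    by auto
  have fin: "finite {(i::nat,j::nat,k::nat). i+j+k \<le> m}"
    by (rule finite_subset[of _ "{..m}\<times>{..m}\<times>{..m}"]) auto
  have fin2: "finite {(i::nat,j::nat,k::nat). i+j+k = Suc m}"
    by (rule finite_subset[of _ "{..Suc m}\<times>{..Suc m}\<times>{..Suc m}"]) auto
  have "card {(i::nat,j::nat,k::nat). i+j+k \<le> Suc m} = ((m+3) choose 3) + ((Suc m + 2) choose 2)"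
    unfolding e by (subst card_Un_disjoint) (use fin fin2 Suc card_level in auto)
  then show ?case by (simp add: numeral_3_eq_3 numeral_2_eq_2)
qed

lemma finite_states: "finite (states N)"
proof -
  have "states N = {xs. set xs \<subseteq> (UNIV::bool set) \<and> length xs = N}" by (auto simp: states_def)
  then show ?thesis using finite_lists_length_eq[of "UNIV::bool set" N] by simp
qed

lemma ps_states[simp]: "permute_state N \<pi> xs \<in> states N"
  by (simp add: permute_state_def states_def)

lemma ps_nth: "t < N \<Longrightarrow> permute_state N \<pi> xs ! t = xs ! inv \<pi> t"
  by (simp add: permute_state_def)

lemma ps_eq_iff:
  assumes p: "\<pi> permutes {..<N}" and xs: "xs \<in> states N" and zs: "zs \<in> states N"
  shows "(xs = permute_state N \<pi> zs) \<longleftrightarrow> (zs = permute_state N (inv \<pi>) xs)"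
proof -
  have b: "bij \<pi>" using p permutes_bij by blast
  have ii: "inv (inv \<pi>) = \<pi>" using b by (simp add: inv_inv_eq)
  have i1: "\<And>t. inv \<pi> (\<pi> t) = t" "\<And>t. \<pi> (inv \<pi> t) = t"
    using b by (auto simp: bij_is_inj inv_f_f bij_is_surj surj_f_inv_f)
  have len: "\<And>f ws. length (permute_state N f ws) = N" by (simp add: permute_state_def)
  have lt: "\<And>t. t < N \<Longrightarrow> \<pi> t < N" "\<And>t. t < N \<Longrightarrow> inv \<pi> t < N"
    using permutes_in_image[OF p] permutes_in_image[OF permutes_inv[OF p]] by auto
  show ?thesis
  proof
    assume "xs = permute_state N \<pi> zs"
    then show "zs = permute_state N (inv \<pi>) xs" using xs zs lt
      by (auto simp: list_eq_iff_nth_eq states_def ps_nth ii i1 len)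
  next
    assume "zs = permute_state N (inv \<pi>) xs"
    then show "xs = permute_state N \<pi> zs" using xs zs lt
      by (auto simp: list_eq_iff_nth_eq states_def ps_nth ii i1 len)
  qed
qed

lemma perm_conj:
  assumes p: "\<pi> permutes {..<N}"
  shows "op_mult N (op_mult N (perm_op N \<pi>) M) (adjoint_op (perm_op N \<pi>)) xs ys
     = (if xs \<in> states N \<and> ys \<in> states N
        then M (permute_state N (inv \<pi>) xs) (permute_state N (inv \<pi>) ys) else 0)"
proof -
  have P: "perm_op N \<pi> xs zs = (if xs \<in> states N \<and> zs = permute_state N (inv \<pi>) xs then 1 else 0)"
    if "zs \<in> states N" for xs zs
    using ps_eq_iff[OF p _ that] that by (auto simp: perm_op_def)
  have inner: "op_mult N (perm_op N \<pi>) M xs zs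
     = (if xs \<in> states N then M (permute_state N (inv \<pi>) xs) zs else 0)" for xs zs
  proof -
    have "op_mult N (perm_op N \<pi>) M xs zs
       = (\<Sum>ws\<in>states N. (if ws = permute_state N (inv \<pi>) xs then (if xs \<in> states N then M ws zs else 0) else 0))"
      unfolding op_mult_def by (rule sum.cong) (auto simp: P)
    also have "\<dots> = (if xs \<in> states N then M (permute_state N (inv \<pi>) xs) zs else 0)"
      by (simp add: sum.delta' finite_states)
    finally show ?thesis .
  qed
  have "op_mult N (op_mult N (perm_op N \<pi>) M) (adjoint_op (perm_op N \<pi>)) xs ys
     = (\<Sum>zs\<in>states N. (if zs = permute_state N (inv \<pi>) ys then
          (if ys \<in> states N then op_mult N (perm_op N \<pi>) M xs zs else 0) else 0))"
    unfolding op_mult_def[of N "op_mult N (perm_op N \<pi>) M"] adjoint_op_def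
    by (rule sum.cong) (auto simp: P)
  also have "\<dots> = (if ys \<in> states N then op_mult N (perm_op N \<pi>) M xs (permute_state N (inv \<pi>) ys) else 0)"
    by (simp add: sum.delta' finite_states)
  finally show ?thesis by (simp add: inner)
qed

lemma pauli_herm: "cnj (pauli_comb a b c y x) = pauli_comb a b c x y"
  by (cases x; cases y) (simp_all add: pauli_comb_def idM_def sigX_def sigY_def sigZ_def)

lemma tensor_in_Sym: "tensor_pow N (pauli_comb a b c) \<in> Sym_ops N"
proof -
  let ?T = "tensor_pow N (pauli_comb a b c)"
  have q: "?T \<in> qubit_ops N" by (auto simp: qubit_ops_def tensor_pow_def)
  have h: "hermitian_op ?T"
    by (auto simp: hermitian_op_def adjoint_op_def fun_eq_iff tensor_pow_def pauli_herm)
  have inv: "op_mult N (op_mult N (perm_op N \<pi>) ?T) (adjoint_op (perm_op N \<pi>)) = ?T"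
    if p: "\<pi> permutes {..<N}" for \<pi>
  proof (intro ext)
    fix xs ys
    have pi: "inv \<pi> permutes {..<N}" using permutes_inv[OF p] .
    have b: "bij_betw \<pi> {..<N} {..<N}" using permutes_imp_bij[OF p] .
    have "(\<Prod>t<N. pauli_comb a b c (xs ! \<pi> t) (ys ! \<pi> t)) = (\<Prod>t<N. pauli_comb a b c (xs ! t) (ys ! t))"
      using prod.reindex_bij_betw[OF b, of "\<lambda>t. pauli_comb a b c (xs ! t) (ys ! t)"] by simp
    moreover have "inv (inv \<pi>) = \<pi>" using p permutes_bij by (blast intro: inv_inv_eq)
    ultimately show "op_mult N (op_mult N (perm_op N \<pi>) ?T) (adjoint_op (perm_op N \<pi>)) xs ys = ?T xs ys"
      unfolding perm_conj[OF p] by (auto simp: tensor_pow_def ps_nth intro!: prod.cong)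
  qed
  show ?thesis using q h inv by (simp add: Sym_ops_def)
qed

lemma sum_states_Suc:
  "(\<Sum>xs\<in>states (Suc N). g xs) = (\<Sum>x\<in>UNIV. \<Sum>xs\<in>states N. g (x # xs))"
  for g :: "bool list \<Rightarrow> complex"
proof -
  have e: "states (Suc N) = (\<lambda>(x,xs). x # xs) ` (UNIV \<times> states N)"
    by (auto simp: states_def image_iff length_Suc_conv)
  have i: "inj_on (\<lambda>(x,xs). x # xs) (UNIV \<times> states N)" by (auto simp: inj_on_def)
  show ?thesis unfolding e sum.reindex[OF i] by (simp add: sum.cartesian_product split_def)
qed

lemma prodsum:
  "(\<Sum>xs\<in>states N. \<Prod>t<N. g t (xs ! t)) = (\<Prod>t<N. \<Sum>x\<in>UNIV. g t x)"
  for g :: "nat \<Rightarrow> bool \<Rightarrow> complex"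
proof (induction N arbitrary: g)
  case 0
  have "states 0 = {[]}" by (auto simp: states_def)
  then show ?case by simp
next
  case (Suc N)
  have "(\<Sum>xs\<in>states (Suc N). \<Prod>t<Suc N. g t (xs ! t))
     = (\<Sum>x\<in>UNIV. \<Sum>xs\<in>states N. g 0 x * (\<Prod>t<N. g (Suc t) (xs ! t)))"
    unfolding sum_states_Suc by (simp only: prod.lessThan_Suc_shift nth_Cons_0 nth_Cons_Suc)
  also have "\<dots> = (\<Sum>x\<in>UNIV. g 0 x * (\<Prod>t<N. \<Sum>y\<in>UNIV. g (Suc t) y))"
    using Suc.IH[of "\<lambda>t. g (Suc t)"] by (simp add: sum_distrib_left[symmetric])
  also have "\<dots> = (\<Prod>t<Suc N. \<Sum>x\<in>UNIV. g t x)"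
    by (simp only: prod.lessThan_Suc_shift sum_distrib_right)
  finally show ?case .
qed

lemma prodsum2:
  "(\<Sum>xs\<in>states N. \<Sum>ys\<in>states N. \<Prod>t<N. h t (xs ! t) (ys ! t)) = (\<Prod>t<N. \<Sum>x\<in>UNIV. \<Sum>y\<in>UNIV. h t x y)"
  for h :: "nat \<Rightarrow> bool \<Rightarrow> bool \<Rightarrow> complex"
proof -
  have "(\<Sum>xs\<in>states N. \<Sum>ys\<in>states N. \<Prod>t<N. h t (xs ! t) (ys ! t))
      = (\<Sum>xs\<in>states N. \<Prod>t<N. \<Sum>y\<in>UNIV. h t (xs ! t) y)"
    by (rule sum.cong[OF refl]) (rule prodsum)
  also have "\<dots> = (\<Prod>t<N. \<Sum>x\<in>UNIV. \<Sum>y\<in>UNIV. h t x y)"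
    by (rule prodsum)
  finally show ?thesis .
qed

definition wx :: "real \<Rightarrow> qmat2" where
  "wx \<alpha> x y = (if x = y then (if x then of_real ((1+\<alpha>)/2) else of_real ((1-\<alpha>)/2)) else 0)"
definition wy :: "real \<Rightarrow> qmat2" where
  "wy \<beta> x y = (if x = y then (if x then of_real (\<beta>/2) else of_real (-\<beta>/2)) else 1/2)"
definition wz :: "real \<Rightarrow> qmat2" where
  "wz \<gamma> x y = (if x = y then (if x then of_real (\<gamma>/2) else of_real (-\<gamma>/2)) else (if x then -\<i>/2 else \<i>/2))"
definition wone :: qmat2 where
  "wone x y = (if x = y then (if x then -1/2 else 1/2) else 0)"

definition pairing :: "qmat2 \<Rightarrow> qmat2 \<Rightarrow> complex" where
  "pairing w A = (\<Sum>x\<in>UNIV. \<Sum>y\<in>UNIV. w x y * A x y)"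

lemma UNIV_bool_sum: "(\<Sum>x\<in>(UNIV::bool set). f x) = f False + f True"
  by (simp add: UNIV_bool)

lemma pair_wx: "pairing (wx \<alpha>) (pauli_comb a b c) = of_real (a - \<alpha>)"
  by (simp add: pairing_def UNIV_bool_sum wx_def pauli_comb_def idM_def sigX_def sigY_def sigZ_def
      field_simps complex_eq_iff)
lemma pair_wy: "pairing (wy \<beta>) (pauli_comb a b c) = of_real (b - \<beta>)"
  by (simp add: pairing_def UNIV_bool_sum wy_def pauli_comb_def idM_def sigX_def sigY_def sigZ_def
      field_simps complex_eq_iff)
lemma pair_wz: "pairing (wz \<gamma>) (pauli_comb a b c) = of_real (c - \<gamma>)"
  by (simp add: pairing_def UNIV_bool_sum wz_def pauli_comb_def idM_def sigX_def sigY_def sigZ_def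
      field_simps complex_eq_iff)
lemma pair_wone: "pairing wone (pauli_comb a b c) = 1"
  by (simp add: pairing_def UNIV_bool_sum wone_def pauli_comb_def idM_def sigX_def sigY_def sigZ_def
      field_simps complex_eq_iff)

definition Lf :: "nat \<Rightarrow> (nat \<Rightarrow> qmat2) \<Rightarrow> qop \<Rightarrow> complex" where
  "Lf N w M = (\<Sum>xs\<in>states N. \<Sum>ys\<in>states N. (\<Prod>t<N. w t (xs ! t) (ys ! t)) * M xs ys)"

lemma Lf_tensor: "Lf N w (tensor_pow N A) = (\<Prod>t<N. pairing (w t) A)"
proof -
  have "Lf N w (tensor_pow N A) = (\<Sum>xs\<in>states N. \<Sum>ys\<in>states N. \<Prod>t<N. w t (xs ! t) (ys ! t) * A (xs ! t) (ys ! t))"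
    unfolding Lf_def
    by (intro sum.cong refl) (simp add: tensor_pow_def prod.distrib)
  also have "\<dots> = (\<Prod>t<N. pairing (w t) A)"
    using prodsum2[of "\<lambda>t x y. w t x y * A x y"] by (simp add: pairing_def)
  finally show ?thesis .
qed

lemma Lf_comb: "finite I \<Longrightarrow> Lf N w (real_comb I r F) = (\<Sum>t\<in>I. of_real (r t) * Lf N w (F t))"
  unfolding Lf_def real_comb_def
  by (simp add: sum_distrib_left sum_distrib_right sum.swap[of _ I] mult_ac)

lemma Lf_zero: "Lf N w (\<lambda>_ _. 0) = 0"
  by (simp add: Lf_def)

definition wsel :: "(nat \<Rightarrow> real) \<Rightarrow> (nat \<Rightarrow> real) \<Rightarrow> (nat \<Rightarrow> real) \<Rightarrow> nat \<Rightarrow> nat \<Rightarrow> nat \<Rightarrow> nat \<Rightarrow> qmat2" where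
  "wsel a b c i0 j0 k0 t = (if t < i0 then wx (a t) else if t < i0 + j0 then wy (b (t - i0))
     else if t < i0 + j0 + k0 then wz (c (t - i0 - j0)) else wone)"
definition vl :: "(nat \<Rightarrow> real) \<Rightarrow> (nat \<Rightarrow> real) \<Rightarrow> (nat \<Rightarrow> real) \<Rightarrow> nat \<Rightarrow> nat \<Rightarrow> nat \<Rightarrow> nat \<Rightarrow> nat \<Rightarrow> nat \<Rightarrow> nat \<Rightarrow> real" where
  "vl a b c i0 j0 k0 i j k t = (if t < i0 then a i - a t else if t < i0 + j0 then b j - b (t - i0)
     else if t < i0 + j0 + k0 then c k - c (t - i0 - j0) else 1)"

lemma Lval: "Lf N (wsel a b c i0 j0 k0) (tensor_pow N (pauli_comb (a i) (b j) (c k)))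
   = (\<Prod>t<N. complex_of_real (vl a b c i0 j0 k0 i j k t))"
  unfolding Lf_tensor
  by (intro prod.cong refl) (simp add: wsel_def vl_def pair_wx pair_wy pair_wz pair_wone)

lemma L_off:
  assumes "i0 + j0 + k0 \<le> N" "\<not> (i0 \<le> i \<and> j0 \<le> j \<and> k0 \<le> k)"
  shows "(\<Prod>t<N. complex_of_real (vl a b c i0 j0 k0 i j k t)) = 0"
proof -
  have "\<exists>t\<in>{..<N}. vl a b c i0 j0 k0 i j k t = 0"
  proof (cases "i < i0")
    case True
    then show ?thesis using assms by (intro bexI[of _ i]) (auto simp: vl_def)
  next
    case F1: False
    show ?thesis
    proof (cases "j < j0")
      case True
      then show ?thesis using assms F1 by (intro bexI[of _ "i0 + j"]) (auto simp: vl_def)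
    next
      case False
      then have "k < k0" using assms F1 by auto
      then show ?thesis using assms F1 False by (intro bexI[of _ "i0 + j0 + k"]) (auto simp: vl_def)
    qed
  qed
  then show ?thesis by (intro prod_zero) auto
qed

lemma L_diag:
  assumes "inj_on a {..N}" "inj_on b {..N}" "inj_on c {..N}" "i0 + j0 + k0 \<le> N"
  shows "(\<Prod>t<N. complex_of_real (vl a b c i0 j0 k0 i0 j0 k0 t)) \<noteq> 0"
proof -
  have "vl a b c i0 j0 k0 i0 j0 k0 t \<noteq> 0" if "t < N" for t
  proof -
    have A: "a i0 \<noteq> a t" if "t < i0" using assms(1,4) that by (auto dest: inj_onD)
    have B: "b j0 \<noteq> b (t - i0)" if "\<not> t < i0" "t < i0 + j0" using assms(2,4) that
      by (auto dest!: inj_onD[of b _ j0])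
    have C: "c k0 \<noteq> c (t - i0 - j0)" if "\<not> t < i0 + j0" "t < i0 + j0 + k0" using assms(3,4) that
      by (auto dest!: inj_onD[of c _ k0])
    show ?thesis using A B C by (auto simp: vl_def)
  qed
  then show ?thesis by (simp add: prod_zero_iff)
qed

lemma finite_Idx: "finite {(i::nat, j::nat, k::nat). i + j + k \<le> N}"
  by (rule finite_subset[of _ "{..N}\<times>{..N}\<times>{..N}"]) auto

lemma indep:
  assumes ia: "inj_on a {..N}" and ib: "inj_on b {..N}" and ic: "inj_on c {..N}"
    and Idx: "Idx = {(i, j, k). i + j + k \<le> N}"
    and F: "F = (\<lambda>(i, j, k). tensor_pow N (pauli_comb (a i) (b j) (c k)))"
    and z: "real_comb Idx r F = (\<lambda>_ _. 0)"
  shows "\<forall>t\<in>Idx. r t = 0"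
proof -
  have fin: "finite Idx" using finite_Idx Idx by simp
  have main: "\<And>i0 j0 k0. i0 + j0 + k0 \<le> N \<Longrightarrow> N - (i0 + j0 + k0) = d \<Longrightarrow> r (i0, j0, k0) = 0" for d
  proof (induction d rule: less_induct)
    case (less d i0 j0 k0)
    let ?w = "wsel a b c i0 j0 k0"
    let ?s = "(i0, j0, k0)"
    have s: "?s \<in> Idx" using less.prems Idx by auto
    have rest: "(\<Sum>t\<in>Idx - {?s}. of_real (r t) * Lf N ?w (F t)) = 0"
  proof (rule sum.neutral, rule ballI)
    fix t0 assume t0: "t0 \<in> Idx - {?s}"
    obtain i j k where tt: "t0 = (i, j, k)" by (cases t0) auto
    have t: "(i, j, k) \<in> Idx" "(i, j, k) \<notin> {?s}" using t0 tt by auto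
    show "of_real (r t0) * Lf N ?w (F t0) = 0" unfolding tt
    proof -
     show "of_real (r (i, j, k)) * Lf N ?w (F (i, j, k)) = 0"
    proof (cases "i0 \<le> i \<and> j0 \<le> j \<and> k0 \<le> k")
      case True
      then have "i0 + j0 + k0 < i + j + k" using t by auto
      then have "r (i, j, k) = 0" using less.IH[of "N - (i + j + k)" i j k] t less.prems Idx by auto
      then show ?thesis by simp
    next
      case False
      then show ?thesis using L_off[OF less.prems(1) False] by (simp add: F Lval)
    qed
    qed
  qed
    have "0 = Lf N ?w (real_comb Idx r F)" using z Lf_zero by simp
    also have "\<dots> = (\<Sum>t\<in>Idx. of_real (r t) * Lf N ?w (F t))" by (rule Lf_comb[OF fin])
    also have "\<dots> = of_real (r ?s) * Lf N ?w (F ?s) + (\<Sum>t\<in>Idx - {?s}. of_real (r t) * Lf N ?w (F t))"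
      by (rule sum.remove[OF fin s])
    also have "\<dots> = of_real (r ?s) * Lf N ?w (F ?s)" using rest by simp
    finally have "of_real (r ?s) * Lf N ?w (F ?s) = 0" by simp
    moreover have "Lf N ?w (F ?s) \<noteq> 0" using L_diag[OF ia ib ic less.prems(1)] by (simp add: F Lval)
    ultimately show ?case by simp
  qed
  show ?thesis using main Idx by auto
qed

lemma F_inj:
  assumes ia: "inj_on a {..N}" and ib: "inj_on b {..N}" and ic: "inj_on c {..N}"
    and Idx: "Idx = {(i, j, k). i + j + k \<le> N}"
    and F: "F = (\<lambda>(i, j, k). tensor_pow N (pauli_comb (a i) (b j) (c k)))"
  shows "inj_on F Idx"
proof (rule inj_onI)
  fix s0 t0
  assume s0: "s0 \<in> Idx" and t0: "t0 \<in> Idx" and e0: "F s0 = F t0"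
  obtain i0 j0 k0 where ss: "s0 = (i0, j0, k0)" by (cases s0) auto
  obtain i j k where tt: "t0 = (i, j, k)" by (cases t0) auto
  have s: "(i0, j0, k0) \<in> Idx" and t: "(i, j, k) \<in> Idx" and e: "F (i0, j0, k0) = F (i, j, k)"
    using s0 t0 e0 ss tt by auto
  have le: "i0 \<le> i \<and> j0 \<le> j \<and> k0 \<le> k" if s: "(i0, j0, k0) \<in> Idx" and e: "F (i0, j0, k0) = F (i, j, k)"
    for i0 j0 k0 i j k
  proof (rule ccontr)
    assume n: "\<not> ?thesis"
    have "Lf N (wsel a b c i0 j0 k0) (F (i0, j0, k0)) = Lf N (wsel a b c i0 j0 k0) (F (i, j, k))" using e by simp
    have s': "i0 + j0 + k0 \<le> N" using s Idx by auto
    have "(\<Prod>t<N. complex_of_real (vl a b c i0 j0 k0 i0 j0 k0 t)) = (\<Prod>t<N. complex_of_real (vl a b c i0 j0 k0 i j k t))"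
      using arg_cong[OF e, of "Lf N (wsel a b c i0 j0 k0)"] unfolding F by (simp add: Lval)
    then show False using L_off[OF s' n] L_diag[OF ia ib ic s'] by simp
  qed
  show "s0 = t0" unfolding ss tt using le[OF s e] le[OF t e[symmetric]] by auto
qed

definition cnt :: "bool list \<Rightarrow> bool list \<Rightarrow> nat \<times> nat \<times> nat" where
  "cnt xs ys = (count (mset (zip xs ys)) (False, False), count (mset (zip xs ys)) (False, True),
     count (mset (zip xs ys)) (True, False))"

lemma cnt_len: "length l = count (mset l) (False, False) + count (mset l) (False, True)
   + count (mset l) (True, False) + count (mset l) (True, True)"
  for l :: "(bool \<times> bool) list"
  by (induction l) auto

lemma cnt_Idx: "xs \<in> states N \<Longrightarrow> ys \<in> states N \<Longrightarrow> cnt xs ys \<in> {(i, j, k). i + j + k \<le> N}"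
  using cnt_len[of "zip xs ys"] by (auto simp: cnt_def states_def)

lemma count_zip_swap: "count (mset (zip ys xs)) (x, y) = count (mset (zip xs ys)) (y, x)"
proof (induction xs arbitrary: ys)
  case Nil then show ?case by simp
next
  case (Cons a xs) then show ?case by (cases ys) auto
qed

lemma cnt_swap: "cnt ys xs = (case cnt xs ys of (p, q, u) \<Rightarrow> (p, u, q))"
  unfolding cnt_def using count_zip_swap[of ys xs False False] count_zip_swap[of ys xs False True]
    count_zip_swap[of ys xs True False] by simp

lemma Sym_inv:
  assumes M: "M \<in> Sym_ops N" and st: "xs \<in> states N" "ys \<in> states N" "xs' \<in> states N" "ys' \<in> states N"
    and e: "cnt xs ys = cnt xs' ys'"
  shows "M xs ys = M xs' ys'"
proof -
  have l: "length xs = N" "length ys = N" "length xs' = N" "length ys' = N" using st by (auto simp: states_def)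
  have c4: "count (mset (zip xs ys)) p = count (mset (zip xs' ys')) p" for p
  proof -
    obtain x y where p: "p = (x, y)" by (cases p)
    have tt: "count (mset (zip xs ys)) (True, True) = count (mset (zip xs' ys')) (True, True)"
      using cnt_len[of "zip xs ys"] cnt_len[of "zip xs' ys'"] e l by (simp add: cnt_def)
    show ?thesis using e tt unfolding p by (cases x; cases y) (simp_all add: cnt_def)
  qed
  then have "mset (zip xs' ys') = mset (zip xs ys)" by (simp add: multiset_eq_iff)
  then obtain p where p: "p permutes {..<length (zip xs ys)}" "permute_list p (zip xs ys) = zip xs' ys'"
    by (rule mset_eq_permutation)
  have pN: "p permutes {..<N}" using p(1) l by simp
  have "zip (permute_list p xs) (permute_list p ys) = zip xs' ys'"
    using p(2) permute_list_zip[OF pN, of xs ys] l by simp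
  then have x': "permute_list p xs = xs'" and y': "permute_list p ys = ys'"
    using l by (auto simp: zip_eq_conv)
  have ii: "inv (inv p) = p" using pN permutes_bij by (blast intro: inv_inv_eq)
  have "permute_state N (inv p) zs = permute_list p zs" if "length zs = N" for zs
    using that by (simp add: permute_state_def permute_list_def ii)
  then have pp: "permute_state N (inv p) xs = xs'" "permute_state N (inv p) ys = ys'" using x' y' l by auto
  have "op_mult N (op_mult N (perm_op N p) M) (adjoint_op (perm_op N p)) = M"
    using M pN by (simp add: Sym_ops_def)
  then have "M xs ys = op_mult N (op_mult N (perm_op N p) M) (adjoint_op (perm_op N p)) xs ys" by simp
  also have "\<dots> = M xs' ys'" unfolding perm_conj[OF pN] using st pp by simp
  finally show ?thesis .
qed

definition sw :: "nat \<times> nat \<times> nat \<Rightarrow> nat \<times> nat \<times> nat" where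
  "sw n = (case n of (p, q, u) \<Rightarrow> (p, u, q))"

definition Eop :: "nat \<Rightarrow> nat \<times> nat \<times> nat \<Rightarrow> qop" where
  "Eop N n xs ys = (if xs \<in> states N \<and> ys \<in> states N \<and> cnt xs ys = n then 1 else 0)"

definition Tb :: "nat \<Rightarrow> nat \<times> nat \<times> nat \<Rightarrow> qop" where
  "Tb N n = (if fst (snd n) = snd (snd n) then Eop N n
     else if snd (snd n) < fst (snd n) then (\<lambda>xs ys. Eop N n xs ys + Eop N (sw n) xs ys)
     else (\<lambda>xs ys. \<i> * (Eop N n xs ys - Eop N (sw n) xs ys)))"

definition gM :: "nat \<Rightarrow> qop \<Rightarrow> nat \<times> nat \<times> nat \<Rightarrow> complex" where
  "gM N M n = (SOME z. \<forall>xs ys. xs \<in> states N \<and> ys \<in> states N \<and> cnt xs ys = n \<longrightarrow> M xs ys = z)"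

definition bM :: "nat \<Rightarrow> qop \<Rightarrow> nat \<times> nat \<times> nat \<Rightarrow> real" where
  "bM N M n = (if snd (snd n) \<le> fst (snd n) then Re (gM N M n) else Im (gM N M n))"

lemma gM_eq:
  assumes M: "M \<in> Sym_ops N" and st: "xs \<in> states N" "ys \<in> states N"
  shows "gM N M (cnt xs ys) = M xs ys"
proof -
  have ex: "\<exists>z. \<forall>xs' ys'. xs' \<in> states N \<and> ys' \<in> states N \<and> cnt xs' ys' = cnt xs ys \<longrightarrow> M xs' ys' = z"
    by (rule exI[of _ "M xs ys"]) (auto intro: Sym_inv[OF M _ _ st])
  have "M xs ys = gM N M (cnt xs ys)" using someI_ex[OF ex] st unfolding gM_def by blast
  then show ?thesis by simp
qed

lemma rep:
  assumes M: "M \<in> Sym_ops N"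
  shows "M xs ys = (\<Sum>n\<in>{(i, j, k). i + j + k \<le> N}. complex_of_real (bM N M n) * Tb N n xs ys)"
proof (cases "xs \<in> states N \<and> ys \<in> states N")
  case False
  then have "M xs ys = 0" using M by (auto simp: Sym_ops_def qubit_ops_def)
  moreover have "Tb N n xs ys = 0" for n using False by (auto simp: Tb_def Eop_def)
  ultimately show ?thesis by simp
next
  case True
  then have st: "xs \<in> states N" "ys \<in> states N" by auto
  define m where "m = cnt xs ys"
  obtain m1 m2 m3 where mm: "m = (m1, m2, m3)" by (cases m) auto
  have swm: "sw m = (m1, m3, m2)" by (simp add: sw_def mm)
  have herm: "M ys xs = cnj (M xs ys)"
  proof -
    have "adjoint_op M = M" using M by (simp add: Sym_ops_def hermitian_op_def)
    then have "adjoint_op M ys xs = M ys xs" by simp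
    then show ?thesis by (simp add: adjoint_op_def)
  qed
  have pr: "fst (snd m) = m2" "snd (snd m) = m3" "fst (snd (sw m)) = m3" "snd (snd (sw m)) = m2"
    unfolding swm using mm by auto
  have g1: "gM N M m = M xs ys" using gM_eq[OF M st] m_def by simp
  have g2: "gM N M (sw m) = cnj (M xs ys)"
  proof -
    have "cnt ys xs = sw m" unfolding m_def sw_def by (rule cnt_swap)
    then show ?thesis using gM_eq[OF M st(2) st(1)] herm by simp
  qed
  have mI: "m \<in> {(i, j, k). i + j + k \<le> N}" using cnt_Idx[OF st] m_def by simp
  have sI: "sw m \<in> {(i, j, k). i + j + k \<le> N}" unfolding swm using mI mm by auto
  have E: "Eop N n xs ys = (if n = m then 1 else 0)" for n using st by (auto simp: Eop_def m_def)
  have ssw: "sw (sw n) = n" for n by (cases n) (auto simp: sw_def)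
  have swe: "(sw n = m) = (n = sw m)" for n using ssw by metis
  let ?f = "\<lambda>n. complex_of_real (bM N M n) * Tb N n xs ys"
  have fin: "finite {(i::nat, j::nat, k::nat). i + j + k \<le> N}" by (rule finite_Idx)
  have red: "(\<Sum>n\<in>{(i, j, k). i + j + k \<le> N}. ?f n) = sum ?f {m, sw m}"
  proof (rule sum.mono_neutral_right[OF fin])
    show "{m, sw m} \<subseteq> {(i, j, k). i + j + k \<le> N}" using mI sI by auto
    show "\<forall>n\<in>{(i, j, k). i + j + k \<le> N} - {m, sw m}. ?f n = 0"
      by (auto simp: Tb_def E swe)
  qed
  show ?thesis
  proof (cases "m2 = m3")
    case True
    then have sm: "sw m = m" unfolding swm using mm by simp
    then have "cnj (M xs ys) = M xs ys" using g1 g2 by simp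
    then have "Im (M xs ys) = 0" by (metis complex_cnj_cancel_iff complex_cnj_zero_iff Im_complex_of_real complex_is_Real_iff Reals_cnj_iff)
    then have "M xs ys = of_real (Re (M xs ys))" by (simp add: complex_eq_iff)
    then show ?thesis unfolding red sm using True
      by (simp add: Tb_def E bM_def g1 pr)
  next
    case False
    then have ne: "sw m \<noteq> m" unfolding swm using mm by simp
    have "sum ?f {m, sw m} = ?f m + ?f (sw m)" using ne by simp
    moreover have "?f m + ?f (sw m) = M xs ys"
    proof (cases "m3 < m2")
      case True
      then show ?thesis using ne False
        by (simp add: Tb_def E bM_def g1 g2 pr ssw complex_eq_iff)
    next
      case F2: False
      then show ?thesis using ne False
        by (simp add: Tb_def E bM_def g1 g2 pr ssw complex_eq_iff)
    qed
    ultimately show ?thesis using red by simp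
  qed
qed

lemma in_spanT:
  assumes M: "M \<in> Sym_ops N"
  shows "M \<in> RV.span (Tb N ` {(i, j, k). i + j + k \<le> N})"
proof -
  have "M = (\<Sum>n\<in>{(i, j, k). i + j + k \<le> N}. rscale (bM N M n) (Tb N n))"
    by (intro ext) (simp add: qsum_apply rscale_def rep[OF M])
  also have "\<dots> \<in> RV.span (Tb N ` {(i, j, k). i + j + k \<le> N})"
    by (intro RV.span_sum RV.span_scale RV.span_base) auto
  finally show ?thesis .
qed

lemma real_comb_sum: "real_comb I r F = (\<Sum>t\<in>I. rscale (r t) (F t))"
  by (intro ext) (simp add: real_comb_def qsum_apply rscale_def)

theorem mainTheorem3:
  fixes N :: nat and a b c :: "nat \<Rightarrow> real"
  assumes "N \<ge> 1"
    and "inj_on a {..N}" and "inj_on b {..N}" and "inj_on c {..N}"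
  defines "Idx \<equiv> {(i, j, k). i + j + k \<le> N}"
    and "F \<equiv> (\<lambda>(i, j, k). tensor_pow N (pauli_comb (a i) (b j) (c k)))"
  shows "card Idx = (N + 3) choose 3
    \<and> (\<forall>t\<in>Idx. F t \<in> Sym_ops N)
    \<and> (\<forall>r. real_comb Idx r F = (\<lambda>_ _. 0) \<longrightarrow> (\<forall>t\<in>Idx. r t = 0))
    \<and> (\<forall>M\<in>Sym_ops N. \<exists>r. M = real_comb Idx r F)"
proof -
  have Ie: "Idx = {(i, j, k). i + j + k \<le> N}" by (simp add: Idx_def)
  have Fe: "F = (\<lambda>(i, j, k). tensor_pow N (pauli_comb (a i) (b j) (c k)))" by (simp add: F_def)
  have fin: "finite Idx" unfolding Idx_def by (rule finite_Idx)
  have c1: "card Idx = (N + 3) choose 3" unfolding Idx_def by (rule card_T3)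
  have c2: "\<forall>t\<in>Idx. F t \<in> Sym_ops N" unfolding F_def by (auto simp: tensor_in_Sym)
  have c3: "\<forall>r. real_comb Idx r F = (\<lambda>_ _. 0) \<longrightarrow> (\<forall>t\<in>Idx. r t = 0)"
    using indep[OF assms(2-4) Ie Fe] by blast
  have injF: "inj_on F Idx" by (rule F_inj[OF assms(2-4) Ie Fe])
  have reidx: "(\<Sum>v\<in>F ` Idx. rscale (u v) v) = real_comb Idx (u \<circ> F) F" for u
    unfolding real_comb_sum sum.reindex[OF injF] by simp
  have indF: "RV.independent (F ` Idx)"
  proof (rule RV.independent_if_scalars_zero)
    show "finite (F ` Idx)" using fin by simp
    fix f x assume z: "(\<Sum>x\<in>F ` Idx. rscale (f x) x) = 0" and x: "x \<in> F ` Idx"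
    have "real_comb Idx (f \<circ> F) F = (\<lambda>_ _. 0)" using z unfolding reidx by (simp add: fun_eq_iff)
    then have "\<forall>t\<in>Idx. (f \<circ> F) t = 0" using c3 by blast
    then show "f x = 0" using x by auto
  qed
  have c4: "\<forall>M\<in>Sym_ops N. \<exists>r. M = real_comb Idx r F"
  proof
    fix M assume M: "M \<in> Sym_ops N"
    have sp: "M \<in> RV.span (F ` Idx)"
    proof (rule ccontr)
      assume n: "M \<notin> RV.span (F ` Idx)"
      have ind: "RV.independent (insert M (F ` Idx))" by (rule RV.independent_insertI[OF n indF])
      have sub: "insert M (F ` Idx) \<subseteq> RV.span (Tb N ` Idx)"
        using in_spanT[OF M] c2 in_spanT unfolding Idx_def by auto
      have "card (insert M (F ` Idx)) \<le> card (Tb N ` Idx)"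
        using RV.independent_span_bound[OF _ ind sub] fin by simp
      also have "\<dots> \<le> card Idx" by (rule card_image_le[OF fin])
      finally have le: "card (insert M (F ` Idx)) \<le> card Idx" .
      have "M \<notin> F ` Idx" using n RV.span_base by blast
      then have "card (insert M (F ` Idx)) = Suc (card Idx)"
        using fin card_image[OF injF] by simp
      then show False using le by simp
    qed
    then obtain u where "M = (\<Sum>v\<in>F ` Idx. rscale (u v) v)"
      using RV.span_finite[of "F ` Idx"] fin by auto
    then show "\<exists>r. M = real_comb Idx r F" unfolding reidx by blast
  qed
  show ?thesis using c1 c2 c3 c4 by blast
qed
end
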